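(* Let $\Gamma$ be a nonempty set and $\mathcal{S}$ a pointwise closed family of subsets of $\Gamma$ containing all singletons. Let $(x_n)_{n\in\mathbb{N}}$ be a bounded sequence in $J\mathcal{S}$. If for every $s\in\mathcal{S}$ the sequence $(s^*(x_n))_{n\in\mathbb{N}}$ is Cauchy, then $(x_n)$ is weakly Cauchy.
   Context: Pointwise closed means $\{\chi_s:s\in\mathcal{S}\}$ is closed in $\{0,1\}^\Gamma$. For a finitely supported $\phi:\Gamma\to\mathbb{R}$, the James-$\mathcal{S}$ norm is $\|\phi\|=\sup\big(\sum_{i=1}^n(\sum_{a\in s_i}\phi(a))^2\big)^{1/2}$ over all finite families of pairwise disjoint $s_1,\dots,s_n\in\mathcal{S}$; $J\mathcal{S}$ is the completion of the finitely supported functions in this norm. For $s\in\mathcal{S}$, $s^*$ is the bounded functional on $J\mathcal{S}$ extending $\phi\mapsto\sum_{a\in s}\phi(a)$. *)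

theory Defs
  imports "HOL-Analysis.Analysis"
begin

text \<open>The ground set Gamma is the universe of a type 'g (nonempty automatically).
  Characteristic functions of subsets of Gamma are the predicates 'g => bool,
  and {0,1}^Gamma carries the product topology (bool has the discrete topology).\<close>

definition pointwise_closed :: "'g set set \<Rightarrow> bool" where
  "pointwise_closed S \<longleftrightarrow> closed {(\<lambda>a. a \<in> s) | s. s \<in> S}"

definition fin_supp :: "('g \<Rightarrow> real) \<Rightarrow> bool" where
  "fin_supp \<phi> \<longleftrightarrow> finite {a. \<phi> a \<noteq> 0}"

definition ssum :: "('g \<Rightarrow> real) \<Rightarrow> 'g set \<Rightarrow> real" where
  "ssum \<phi> s = sum \<phi> (s \<inter> {a. \<phi> a \<noteq> 0})"

definition jnorm :: "'g set set \<Rightarrow> ('g \<Rightarrow> real) \<Rightarrow> real" where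
  "jnorm S \<phi> = (SUP F \<in> {F. finite F \<and> F \<subseteq> S \<and> disjoint F}.
                    sqrt (\<Sum>s\<in>F. (ssum \<phi> s)\<^sup>2))"

text \<open>A completion of the finitely supported functions in the James-S norm:
  a Banach space X together with a linear isometric map E from the finitely supported
  functions into X with dense range.  (The completion is unique up to isometric isomorphism.)\<close>
definition is_JS_completion ::
  "'g set set \<Rightarrow> (('g \<Rightarrow> real) \<Rightarrow> 'x::banach) \<Rightarrow> bool" where
  "is_JS_completion S E \<longleftrightarrow>
     (\<forall>\<phi> \<psi>. fin_supp \<phi> \<longrightarrow> fin_supp \<psi> \<longrightarrow> E (\<lambda>a. \<phi> a + \<psi> a) = E \<phi> + E \<psi>) \<and>
     (\<forall>\<phi> c. fin_supp \<phi> \<longrightarrow> E (\<lambda>a. c * \<phi> a) = c *\<^sub>R E \<phi>) \<and>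
     (\<forall>\<phi>. fin_supp \<phi> \<longrightarrow> norm (E \<phi>) = jnorm S \<phi>) \<and>
     closure (E ` {\<phi>. fin_supp \<phi>}) = UNIV"

definition is_s_star ::
  "'g set set \<Rightarrow> (('g \<Rightarrow> real) \<Rightarrow> 'x::banach) \<Rightarrow> 'g set \<Rightarrow> ('x \<Rightarrow> real) \<Rightarrow> bool" where
  "is_s_star S E s f \<longleftrightarrow> bounded_linear f \<and> (\<forall>\<phi>. fin_supp \<phi> \<longrightarrow> f (E \<phi>) = ssum \<phi> s)"

definition weakly_Cauchy :: "(nat \<Rightarrow> 'x::real_normed_vector) \<Rightarrow> bool" where
  "weakly_Cauchy x \<longleftrightarrow> (\<forall>f::'x \<Rightarrow> real. bounded_linear f \<longrightarrow> Cauchy (\<lambda>n. f (x n)))"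

end

theory Submission
  imports Defs
begin


lemma fs_add: "fin_supp \<phi> \<Longrightarrow> fin_supp \<psi> \<Longrightarrow> fin_supp (\<lambda>a. \<phi> a + \<psi> a)"
  unfolding fin_supp_def
  by (rule finite_subset[of _ "{a. \<phi> a \<noteq> 0} \<union> {a. \<psi> a \<noteq> 0}"]) auto

lemma fs_scale: "fin_supp \<phi> \<Longrightarrow> fin_supp (\<lambda>a. c * \<phi> a)"
  unfolding fin_supp_def
  by (rule finite_subset[of _ "{a. \<phi> a \<noteq> 0}"]) auto

lemma fs_diff: "fin_supp \<phi> \<Longrightarrow> fin_supp \<psi> \<Longrightarrow> fin_supp (\<lambda>a. \<phi> a - \<psi> a)"
  unfolding fin_supp_def
  by (rule finite_subset[of _ "{a. \<phi> a \<noteq> 0} \<union> {a. \<psi> a \<noteq> 0}"]) auto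

lemma fs_zero: "fin_supp (\<lambda>a. 0)"
  unfolding fin_supp_def by simp

lemma ssum_eq:
  assumes "finite T" "{a. \<phi> a \<noteq> 0} \<subseteq> T"
  shows "ssum \<phi> s = sum \<phi> (s \<inter> T)"
  unfolding ssum_def
  by (rule sum.mono_neutral_left) (use assms in auto)

lemma ssum_add:
  assumes "fin_supp \<phi>" "fin_supp \<psi>"
  shows "ssum (\<lambda>a. \<phi> a + \<psi> a) s = ssum \<phi> s + ssum \<psi> s"
proof -
  let ?T = "{a. \<phi> a \<noteq> 0} \<union> {a. \<psi> a \<noteq> 0}"
  have fT: "finite ?T" using assms unfolding fin_supp_def by auto
  have "ssum (\<lambda>a. \<phi> a + \<psi> a) s = sum (\<lambda>a. \<phi> a + \<psi> a) (s \<inter> ?T)"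
    by (rule ssum_eq[OF fT]) auto
  also have "\<dots> = sum \<phi> (s \<inter> ?T) + sum \<psi> (s \<inter> ?T)" by (simp add: sum.distrib)
  also have "sum \<phi> (s \<inter> ?T) = ssum \<phi> s" by (rule ssum_eq[symmetric, OF fT]) auto
  also have "sum \<psi> (s \<inter> ?T) = ssum \<psi> s" by (rule ssum_eq[symmetric, OF fT]) auto
  finally show ?thesis .
qed

lemma ssum_scale:
  assumes "fin_supp \<phi>"
  shows "ssum (\<lambda>a. c * \<phi> a) s = c * ssum \<phi> s"
proof -
  let ?T = "{a. \<phi> a \<noteq> 0}"
  have fT: "finite ?T" using assms unfolding fin_supp_def by auto
  have "ssum (\<lambda>a. c * \<phi> a) s = sum (\<lambda>a. c * \<phi> a) (s \<inter> ?T)"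
    by (rule ssum_eq[OF fT]) auto
  also have "\<dots> = c * sum \<phi> (s \<inter> ?T)" by (simp add: sum_distrib_left)
  also have "sum \<phi> (s \<inter> ?T) = ssum \<phi> s" by (rule ssum_eq[symmetric, OF fT]) auto
  finally show ?thesis .
qed

lemma ssum_empty: "ssum \<phi> {} = 0"
  unfolding ssum_def by simp

definition fam :: "'g set set \<Rightarrow> 'g set set set" where
  "fam S = {F. finite F \<and> F \<subseteq> S \<and> disjoint F}"

lemma sum_disj_bound:
  fixes w :: "'g \<Rightarrow> real"
  assumes "finite F" "disjoint F" "finite T" "\<And>a. w a \<ge> 0"
  shows "(\<Sum>s\<in>F. sum w (s \<inter> T)) \<le> sum w T"
proof -
  have "(\<Sum>s\<in>F. sum w (s \<inter> T)) = (\<Sum>s\<in>F. \<Sum>a\<in>T. if a \<in> s then w a else 0)"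
    proof (rule sum.cong[OF refl])
    fix s show "sum w (s \<inter> T) = (\<Sum>a\<in>T. if a \<in> s then w a else 0)"
      using sum.inter_restrict[OF assms(3), of w s] by (simp add: Int_commute)
  qed
  also have "\<dots> = (\<Sum>a\<in>T. \<Sum>s\<in>F. if a \<in> s then w a else 0)"
    by (rule sum.swap)
  also have "\<dots> \<le> (\<Sum>a\<in>T. w a)"
  proof (rule sum_mono)
    fix a assume "a \<in> T"
    show "(\<Sum>s\<in>F. if a \<in> s then w a else 0) \<le> w a"
    proof (cases "\<exists>s0\<in>F. a \<in> s0")
      case True
      then obtain s0 where s0: "s0 \<in> F" "a \<in> s0" by blast
      have "(\<Sum>s\<in>F. if a \<in> s then w a else 0) = (if a \<in> s0 then w a else 0) + (\<Sum>s\<in>F-{s0}. if a \<in> s then w a else 0)"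
        using sum.remove[OF assms(1) s0(1), of "\<lambda>s. if a \<in> s then w a else 0"] by simp
      also have "(\<Sum>s\<in>F-{s0}. if a \<in> s then w a else 0) = 0"
      proof (rule sum.neutral, intro ballI)
        fix s assume "s \<in> F - {s0}"
        then have "s \<inter> s0 = {}" using assms(2) s0(1) unfolding disjoint_def by blast
        then show "(if a \<in> s then w a else 0) = 0" using s0 by auto
      qed
      finally show ?thesis using s0 by simp
    next
      case False
      then show ?thesis using assms(4)[of a] by (simp add: sum.neutral)
    qed
  qed
  finally show ?thesis by simp
qed

lemma jnorm_bdd:
  assumes "fin_supp \<phi>"
  shows "bdd_above ((\<lambda>F. sqrt (\<Sum>s\<in>F. (ssum \<phi> s)\<^sup>2)) ` fam S)"
proof -
  let ?T = "{a. \<phi> a \<noteq> 0}"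
  have fT: "finite ?T" using assms unfolding fin_supp_def by auto
  define M where "M = (\<Sum>a\<in>?T. \<bar>\<phi> a\<bar>)"
  have M0: "M \<ge> 0" unfolding M_def by (simp add: sum_nonneg)
  have sb: "\<bar>ssum \<phi> s\<bar> \<le> sum (\<lambda>a. \<bar>\<phi> a\<bar>) (s \<inter> ?T)" for s
    unfolding ssum_def by (simp add: Int_commute sum_abs)
  have sM: "\<bar>ssum \<phi> s\<bar> \<le> M" for s
    using sb[of s] sum_mono2[OF fT, of "s \<inter> ?T" "\<lambda>a. \<bar>\<phi> a\<bar>"] unfolding M_def by auto
  show ?thesis
  proof (rule bdd_aboveI2)
    fix F assume "F \<in> fam S"
    then have F: "finite F" "disjoint F" unfolding fam_def by auto
    have "(\<Sum>s\<in>F. (ssum \<phi> s)\<^sup>2) \<le> (\<Sum>s\<in>F. M * sum (\<lambda>a. \<bar>\<phi> a\<bar>) (s \<inter> ?T))"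
    proof (rule sum_mono)
      fix s
      have "(ssum \<phi> s)\<^sup>2 = \<bar>ssum \<phi> s\<bar> * \<bar>ssum \<phi> s\<bar>" by (simp add: power2_eq_square abs_mult_self_eq)
      also have "\<dots> \<le> M * sum (\<lambda>a. \<bar>\<phi> a\<bar>) (s \<inter> ?T)"
        by (rule mult_mono[OF sM sb[of s] M0]) simp
      finally show "(ssum \<phi> s)\<^sup>2 \<le> M * sum (\<lambda>a. \<bar>\<phi> a\<bar>) (s \<inter> ?T)" .
    qed
    also have "\<dots> = M * (\<Sum>s\<in>F. sum (\<lambda>a. \<bar>\<phi> a\<bar>) (s \<inter> ?T))" by (simp add: sum_distrib_left)
    also have "\<dots> \<le> M * M"
      using sum_disj_bound[OF F fT, of "\<lambda>a. \<bar>\<phi> a\<bar>"] M0 unfolding M_def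
      by (simp add: mult_left_mono)
    finally have "sqrt (\<Sum>s\<in>F. (ssum \<phi> s)\<^sup>2) \<le> sqrt (M * M)" by (rule real_sqrt_le_mono)
    then show "sqrt (\<Sum>s\<in>F. (ssum \<phi> s)\<^sup>2) \<le> M" using M0 by simp
  qed
qed

lemma fam_ne: "{} \<in> fam S" unfolding fam_def by simp

lemma jnorm_upper:
  assumes "fin_supp \<phi>" "F \<in> fam S"
  shows "sqrt (\<Sum>s\<in>F. (ssum \<phi> s)\<^sup>2) \<le> jnorm S \<phi>"
  unfolding jnorm_def fam_def[symmetric]
  by (rule cSUP_upper[OF assms(2) jnorm_bdd[OF assms(1), where S=S]])

lemma jnorm_approx:
  assumes "fin_supp \<phi>" "e > 0"
  shows "\<exists>F\<in>fam S. sqrt (\<Sum>s\<in>F. (ssum \<phi> s)\<^sup>2) > jnorm S \<phi> - e"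
proof -
  have "jnorm S \<phi> - e < jnorm S \<phi>" using assms by simp
  then show ?thesis
    unfolding jnorm_def fam_def[symmetric]
    using less_cSUP_iff[of "fam S" "\<lambda>F. sqrt (\<Sum>s\<in>F. (ssum \<phi> s)\<^sup>2)", OF _ jnorm_bdd[OF assms(1), where S=S]] fam_ne
    by blast
qed

lemma compact_UNIV_fun:
  assumes "compact (UNIV :: 'b::topological_space set)"
  shows "compact (UNIV :: ('a \<Rightarrow> 'b) set)"
proof -
  have "compact_space (euclidean :: 'b topology)"
    using assms by (simp add: compact_space_def)
  then have "compact_space (product_topology (\<lambda>i::'a. (euclidean :: 'b topology)) UNIV)"
    by (simp add: compact_space_product_topology)
  then show ?thesis
    by (simp add: euclidean_product_topology compact_space_def)
qed

lemma compact_UNIV_bool: "compact (UNIV :: bool set)"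
  by (simp add: finite_imp_compact)




lemma closed_dense_UNIV:
  assumes "closed A" "D \<subseteq> A" "closure D = UNIV"
  shows "A = UNIV"
  using closure_minimal[OF assms(2,1)] assms(3) by auto

locale jsc =
  fixes S :: "'g set set" and E :: "('g \<Rightarrow> real) \<Rightarrow> 'x::banach"
  assumes sing: "\<forall>a. {a} \<in> S" and comp: "is_JS_completion S E"
begin

definition D where "D = E ` {\<phi>. fin_supp \<phi>}"

lemma E_add: "fin_supp \<phi> \<Longrightarrow> fin_supp \<psi> \<Longrightarrow> E (\<lambda>a. \<phi> a + \<psi> a) = E \<phi> + E \<psi>"
  using comp unfolding is_JS_completion_def by blast
lemma E_scale: "fin_supp \<phi> \<Longrightarrow> E (\<lambda>a. c * \<phi> a) = c *\<^sub>R E \<phi>"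
  using comp unfolding is_JS_completion_def by blast
lemma E_norm: "fin_supp \<phi> \<Longrightarrow> norm (E \<phi>) = jnorm S \<phi>"
  using comp unfolding is_JS_completion_def by blast
lemma D_dense: "closure D = UNIV"
  using comp unfolding is_JS_completion_def D_def by blast

lemma E_diff: "fin_supp \<phi> \<Longrightarrow> fin_supp \<psi> \<Longrightarrow> E (\<lambda>a. \<phi> a - \<psi> a) = E \<phi> - E \<psi>"
proof -
  assume a: "fin_supp \<phi>" "fin_supp \<psi>"
  have "E (\<lambda>a. \<phi> a + (\<lambda>a. (-1) * \<psi> a) a) = E \<phi> + E (\<lambda>a. (-1) * \<psi> a)"
    by (rule E_add[OF a(1) fs_scale[OF a(2)]])
  moreover have "E (\<lambda>a. (-1) * \<psi> a) = (-1) *\<^sub>R E \<psi>" by (rule E_scale[OF a(2)])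
  ultimately show ?thesis by simp
qed

lemma dense_eq:
  assumes "closed A" "\<And>\<phi>. fin_supp \<phi> \<Longrightarrow> E \<phi> \<in> A"
  shows "x \<in> A"
  using closed_dense_UNIV[OF assms(1) _ D_dense] assms(2) unfolding D_def by blast

lemma approx:
  assumes "e > 0" shows "\<exists>\<phi>. fin_supp \<phi> \<and> norm (x - E \<phi>) < e"
proof -
  have "x \<in> closure D" using D_dense by simp
  then obtain v where "v \<in> D" "dist v x < e" using assms closure_approachable by blast
  then show ?thesis unfolding D_def by (auto simp: dist_norm norm_minus_commute)
qed

lemma ssum_bound:
  assumes "fin_supp \<phi>" "s \<in> S"
  shows "\<bar>ssum \<phi> s\<bar> \<le> norm (E \<phi>)"
proof -
  have "{s} \<in> fam S" using assms(2) unfolding fam_def by (simp add: pairwise_def)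
  from jnorm_upper[OF assms(1) this] show ?thesis using E_norm[OF assms(1)] by simp
qed

lemma ext_functional:
  fixes l :: "('g \<Rightarrow> real) \<Rightarrow> real"
  assumes add: "\<And>\<phi> \<psi>. fin_supp \<phi> \<Longrightarrow> fin_supp \<psi> \<Longrightarrow> l (\<lambda>a. \<phi> a + \<psi> a) = l \<phi> + l \<psi>"
    and scale: "\<And>\<phi> c. fin_supp \<phi> \<Longrightarrow> l (\<lambda>a. c * \<phi> a) = c * l \<phi>"
    and bd: "\<And>\<phi>. fin_supp \<phi> \<Longrightarrow> \<bar>l \<phi>\<bar> \<le> norm (E \<phi>)"
  shows "\<exists>g. bounded_linear g \<and> (\<forall>\<phi>. fin_supp \<phi> \<longrightarrow> g (E \<phi>) = l \<phi>) \<and> (\<forall>x. \<bar>g x\<bar> \<le> norm x)"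
proof -
  have ldiff: "l (\<lambda>a. \<phi> a - \<psi> a) = l \<phi> - l \<psi>" if "fin_supp \<phi>" "fin_supp \<psi>" for \<phi> \<psi>
  proof -
    have "l (\<lambda>a. \<phi> a + (\<lambda>a. (-1) * \<psi> a) a) = l \<phi> + l (\<lambda>a. (-1) * \<psi> a)"
      by (rule add[OF that(1) fs_scale[OF that(2)]])
    moreover have "l (\<lambda>a. (-1) * \<psi> a) = (-1) * l \<psi>" by (rule scale[OF that(2)])
    ultimately show ?thesis by simp
  qed
  have lip: "\<bar>l \<phi> - l \<psi>\<bar> \<le> norm (E \<phi> - E \<psi>)" if "fin_supp \<phi>" "fin_supp \<psi>" for \<phi> \<psi>
    using bd[OF fs_diff[OF that]] ldiff[OF that] E_diff[OF that] by simp
  define h where "h v = l (SOME \<phi>. fin_supp \<phi> \<and> E \<phi> = v)" for v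
  have h: "h (E \<phi>) = l \<phi>" if "fin_supp \<phi>" for \<phi>
  proof -
    define \<psi> where "\<psi> = (SOME \<psi>. fin_supp \<psi> \<and> E \<psi> = E \<phi>)"
    have "fin_supp \<psi> \<and> E \<psi> = E \<phi>" unfolding \<psi>_def by (rule someI[of _ \<phi>]) (use that in simp)
    then have "\<bar>l \<psi> - l \<phi>\<bar> \<le> 0" using lip[of \<psi> \<phi>] that by simp
    then show ?thesis unfolding h_def \<psi>_def[symmetric] by simp
  qed
  have uc: "uniformly_continuous_on D h"
    unfolding uniformly_continuous_on_def
  proof (intro allI impI)
    fix e :: real assume "e > 0"
    show "\<exists>d>0. \<forall>x\<in>D. \<forall>x'\<in>D. dist x' x < d \<longrightarrow> dist (h x') (h x) < e"
    proof (rule exI[of _ e], intro conjI ballI impI)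
      fix v w assume "v \<in> D" "w \<in> D" "dist w v < e"
      then obtain \<phi> \<psi> where "fin_supp \<phi>" "fin_supp \<psi>" "v = E \<phi>" "w = E \<psi>" unfolding D_def by auto
      then show "dist (h w) (h v) < e" using lip[of \<psi> \<phi>] h \<open>dist w v < e\<close> by (simp add: dist_norm dist_real_def)
    qed (use \<open>e > 0\<close> in simp)
  qed
  obtain g where g1: "uniformly_continuous_on (closure D) g" and g2: "\<And>x. x \<in> D \<Longrightarrow> h x = g x"
    using uniformly_continuous_on_extension_on_closure[OF uc] by metis
  have gc: "continuous_on UNIV g" using uniformly_continuous_imp_continuous[OF g1] D_dense by simp
  have gE: "g (E \<phi>) = l \<phi>" if "fin_supp \<phi>" for \<phi>
    using g2[of "E \<phi>"] h[OF that] that unfolding D_def by auto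
  have gbd: "\<bar>g x\<bar> \<le> norm x" for x
  proof (rule dense_eq[of "{x. \<bar>g x\<bar> \<le> norm x}", simplified])
    show "closed {x. \<bar>g x\<bar> \<le> norm x}"
      by (rule closed_Collect_le) (auto intro!: continuous_intros gc)
    show "\<bar>g (E \<phi>)\<bar> \<le> norm (E \<phi>)" if "fin_supp \<phi>" for \<phi> using gE[OF that] bd[OF that] by simp
  qed
  have gaddD: "g (x + E \<psi>) = g x + g (E \<psi>)" if "fin_supp \<psi>" for x \<psi>
  proof (rule dense_eq[of "{x. g (x + E \<psi>) = g x + g (E \<psi>)}", simplified])
    show "closed {x. g (x + E \<psi>) = g x + g (E \<psi>)}"
      by (rule closed_Collect_eq) (auto intro!: continuous_intros continuous_on_compose2[OF gc])
    show "g (E \<phi> + E \<psi>) = g (E \<phi>) + g (E \<psi>)" if "fin_supp \<phi>" for \<phi>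
      using E_add[OF that \<open>fin_supp \<psi>\<close>] gE[OF fs_add[OF that \<open>fin_supp \<psi>\<close>]] gE[OF that] gE[OF \<open>fin_supp \<psi>\<close>]
        add[OF that \<open>fin_supp \<psi>\<close>] by simp
  qed
  have gadd: "g (x + y) = g x + g y" for x y
  proof (rule dense_eq[of "{y. g (x + y) = g x + g y}", simplified])
    show "closed {y. g (x + y) = g x + g y}"
      by (rule closed_Collect_eq) (auto intro!: continuous_intros continuous_on_compose2[OF gc])
    show "g (x + E \<phi>) = g x + g (E \<phi>)" if "fin_supp \<phi>" for \<phi> using gaddD[OF that] .
  qed
  have gscale: "g (c *\<^sub>R x) = c * g x" for c x
  proof (rule dense_eq[of "{x. g (c *\<^sub>R x) = c * g x}", simplified])
    show "closed {x. g (c *\<^sub>R x) = c * g x}"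
      by (rule closed_Collect_eq) (auto intro!: continuous_intros continuous_on_compose2[OF gc])
    show "g (c *\<^sub>R E \<phi>) = c * g (E \<phi>)" if "fin_supp \<phi>" for \<phi>
    proof -
      have "g (E (\<lambda>a. c * \<phi> a)) = l (\<lambda>a. c * \<phi> a)" by (rule gE[OF fs_scale[OF that]])
      moreover have "E (\<lambda>a. c * \<phi> a) = c *\<^sub>R E \<phi>" by (rule E_scale[OF that])
      moreover have "l (\<lambda>a. c * \<phi> a) = c * l \<phi>" by (rule scale[OF that])
      ultimately show ?thesis using gE[OF that] by simp
    qed
  qed
  have "bounded_linear g"
    by (rule bounded_linear_intro[of _ 1]) (use gadd gscale gbd in auto)
  then show ?thesis using gE gbd by blast
qed

definition cs :: "'g set \<Rightarrow> 'x \<Rightarrow> real" where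
  "cs s = (if s = {} then (\<lambda>_. 0) else
     (SOME g. bounded_linear g \<and> (\<forall>\<phi>. fin_supp \<phi> \<longrightarrow> g (E \<phi>) = ssum \<phi> s) \<and> (\<forall>x. \<bar>g x\<bar> \<le> norm x)))"

definition S0 where "S0 = insert {} S"

lemma cs_props:
  assumes "s \<in> S0"
  shows "bounded_linear (cs s) \<and> (\<forall>\<phi>. fin_supp \<phi> \<longrightarrow> cs s (E \<phi>) = ssum \<phi> s) \<and> (\<forall>x. \<bar>cs s x\<bar> \<le> norm x)"
proof (cases "s = {}")
  case True
  then show ?thesis by (simp add: cs_def ssum_empty bounded_linear_zero)
next
  case False
  then have sS: "s \<in> S" using assms unfolding S0_def by auto
  have "\<exists>g. bounded_linear g \<and> (\<forall>\<phi>. fin_supp \<phi> \<longrightarrow> g (E \<phi>) = ssum \<phi> s) \<and> (\<forall>x. \<bar>g x\<bar> \<le> norm x)"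
    by (rule ext_functional) (auto simp: ssum_add ssum_scale ssum_bound[OF _ sS])
  from someI_ex[OF this] show ?thesis using False unfolding cs_def by simp
qed

lemma cs_bl: "s \<in> S0 \<Longrightarrow> bounded_linear (cs s)" using cs_props by blast
lemma cs_E: "s \<in> S0 \<Longrightarrow> fin_supp \<phi> \<Longrightarrow> cs s (E \<phi>) = ssum \<phi> s" using cs_props by blast
lemma cs_bd: "s \<in> S0 \<Longrightarrow> \<bar>cs s x\<bar> \<le> norm x" using cs_props by blast
lemma cs_empty: "cs {} = (\<lambda>_. 0)" by (simp add: cs_def)

lemma cs_star: "s \<in> S \<Longrightarrow> is_s_star S E s (cs s)"
  unfolding is_s_star_def using cs_props[of s] by (auto simp: S0_def)

lemma cs_cont: "s \<in> S0 \<Longrightarrow> continuous_on A (cs s)"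
  by (rule linear_continuous_on[OF cs_bl])

lemma cs_diff: "s \<in> S0 \<Longrightarrow> cs s (x - y) = cs s x - cs s y"
  using linear_diff[OF bounded_linear.linear[OF cs_bl]] by blast
lemma cs_add: "s \<in> S0 \<Longrightarrow> cs s (x + y) = cs s x + cs s y"
  using linear_add[OF bounded_linear.linear[OF cs_bl]] by blast
lemma cs_scale: "s \<in> S0 \<Longrightarrow> cs s (c *\<^sub>R x) = c * cs s x"
  using linear_scale[OF bounded_linear.linear[OF cs_bl]] by simp

lemma N1:
  assumes "F \<in> fam S"
  shows "L2_set (\<lambda>s. cs s x) F \<le> norm x"
proof -
  have F: "finite F" "F \<subseteq> S" using assms unfolding fam_def by auto
  have FS0: "s \<in> S0" if "s \<in> F" for s using F(2) that unfolding S0_def by auto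
  show ?thesis
  proof (rule dense_eq[of "{x. L2_set (\<lambda>s. cs s x) F \<le> norm x}", simplified])
    show "closed {x. L2_set (\<lambda>s. cs s x) F \<le> norm x}"
      unfolding L2_set_def
      by (rule closed_Collect_le) (auto intro!: continuous_intros cs_cont FS0)
    show "L2_set (\<lambda>s. cs s (E \<phi>)) F \<le> norm (E \<phi>)" if "fin_supp \<phi>" for \<phi>
    proof -
      have "L2_set (\<lambda>s. cs s (E \<phi>)) F = sqrt (\<Sum>s\<in>F. (ssum \<phi> s)\<^sup>2)"
        unfolding L2_set_def by (intro arg_cong[where f=sqrt] sum.cong refl) (simp add: cs_E[OF FS0 that])
      also have "\<dots> \<le> norm (E \<phi>)" using jnorm_upper[OF that assms] E_norm[OF that] by simp
      finally show ?thesis .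
    qed
  qed
qed

lemma N2:
  assumes "e > 0"
  shows "\<exists>F\<in>fam S. L2_set (\<lambda>s. cs s x) F > norm x - e"
proof -
  obtain \<phi> where \<phi>: "fin_supp \<phi>" "norm (x - E \<phi>) < e/3" using approx[of "e/3"] assms by auto
  obtain F where F: "F \<in> fam S" "sqrt (\<Sum>s\<in>F. (ssum \<phi> s)\<^sup>2) > jnorm S \<phi> - e/3"
    using jnorm_approx[OF \<phi>(1), of "e/3" S] assms by auto
  have FS0: "s \<in> S0" if "s \<in> F" for s using F(1) that unfolding S0_def fam_def by auto
  have eq: "L2_set (\<lambda>s. cs s (E \<phi>)) F = sqrt (\<Sum>s\<in>F. (ssum \<phi> s)\<^sup>2)"
    unfolding L2_set_def by (intro arg_cong[where f=sqrt] sum.cong refl) (simp add: cs_E[OF FS0 \<phi>(1)])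
  have "L2_set (\<lambda>s. cs s (E \<phi>)) F = L2_set (\<lambda>s. cs s x + cs s (E \<phi> - x)) F"
    by (intro L2_set_cong refl) (simp add: cs_diff[OF FS0])
  also have "\<dots> \<le> L2_set (\<lambda>s. cs s x) F + L2_set (\<lambda>s. cs s (E \<phi> - x)) F"
    by (rule L2_set_triangle_ineq)
  finally have 1: "L2_set (\<lambda>s. cs s (E \<phi>)) F \<le> L2_set (\<lambda>s. cs s x) F + L2_set (\<lambda>s. cs s (E \<phi> - x)) F" .
  have 2: "L2_set (\<lambda>s. cs s (E \<phi> - x)) F \<le> norm (E \<phi> - x)" by (rule N1[OF F(1)])
  have 3: "norm x \<le> norm (E \<phi>) + norm (x - E \<phi>)" by (metis norm_triangle_sub add.commute)
  have "norm x - e < L2_set (\<lambda>s. cs s x) F"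
    using 1 2 3 eq F(2) E_norm[OF \<phi>(1)] \<phi>(2) by (simp add: norm_minus_commute)
  then show ?thesis using F(1) by blast
qed

end



lemma fam_subset: "F \<in> fam S \<Longrightarrow> G \<subseteq> F \<Longrightarrow> G \<in> fam S"
  unfolding fam_def by (auto intro: finite_subset pairwise_subset)

lemma finite_in_range_prefix:
  fixes f :: "nat \<Rightarrow> 'b"
  assumes "finite B" "B \<subseteq> range f"
  shows "\<exists>N. B \<subseteq> f ` {..N}"
  using assms
proof (induction B rule: finite_induct)
  case empty then show ?case by simp
next
  case (insert b B)
  then obtain N where N: "B \<subseteq> f ` {..N}" by auto
  obtain i where i: "b = f i" using insert.prems by auto
  have "f ` {..N} \<subseteq> f ` {..max N i}" by (intro image_mono) auto
  moreover have "b \<in> f ` {..max N i}" using i by auto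
  ultimately have "insert b B \<subseteq> f ` {..max N i}" using N by blast
  then show ?case by blast
qed

lemma bool_cont: "continuous_on A (f :: bool \<Rightarrow> 'b::topological_space)"
  unfolding continuous_on_topological by (auto simp: open_discrete)

lemma bool_closed: "closed (A :: bool set)"
  by (simp add: closed_def open_discrete)

lemma coord2_cont: "continuous_on A (\<lambda>Q::nat \<Rightarrow> 'g \<Rightarrow> bool. Q i a)"
proof -
  have "continuous_on A (\<lambda>Q::nat \<Rightarrow> 'g \<Rightarrow> bool. Q i)"
    by (rule continuous_on_subset[OF continuous_on_product_coordinates]) simp
  then show ?thesis
    using continuous_on_compose2[of UNIV "\<lambda>p::'g\<Rightarrow>bool. p a" A "\<lambda>Q. Q i"] by simp
qed

lemma coord1_cont: "continuous_on A (\<lambda>p::'g \<Rightarrow> bool. p a)"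
  by (rule continuous_on_subset[OF continuous_on_product_coordinates]) simp

lemma coordQ_cont: "continuous_on A (\<lambda>Q::nat \<Rightarrow> 'g \<Rightarrow> bool. Q i)"
  by (rule continuous_on_subset[OF continuous_on_product_coordinates]) simp

context jsc begin

lemma fin_bessel:
  assumes P: "\<And>i. P i \<in> S0" and disj: "\<And>i j. i \<noteq> j \<Longrightarrow> P i \<inter> P j = {}"
  shows "(\<Sum>i<(N::nat). (cs (P i) v)\<^sup>2) \<le> (norm v)\<^sup>2"
proof -
  define I where "I = {i. i < N \<and> P i \<noteq> {}}"
  have fI: "finite I" unfolding I_def by (rule finite_subset[of _ "{..<N}"]) auto
  have "(\<Sum>i<N. (cs (P i) v)\<^sup>2) = (\<Sum>i\<in>I. (cs (P i) v)\<^sup>2)"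
    by (rule sum.mono_neutral_right) (auto simp: I_def cs_empty)
  also have inj: "inj_on P I"
  proof (rule inj_onI)
    fix i j assume "i \<in> I" "j \<in> I" "P i = P j"
    then show "i = j" using disj[of i j] unfolding I_def by auto
  qed
  have "(\<Sum>i\<in>I. (cs (P i) v)\<^sup>2) = (\<Sum>s\<in>P ` I. (cs s v)\<^sup>2)"
    by (simp add: sum.reindex[OF inj])
  also have "P ` I \<in> fam S"
    unfolding fam_def
  proof (intro CollectI conjI)
    show "finite (P ` I)" using fI by simp
    show "P ` I \<subseteq> S" using P unfolding I_def S0_def by auto
    show "disjoint (P ` I)" unfolding disjoint_def
    proof (intro ballI impI)
      fix A B assume "A \<in> P ` I" "B \<in> P ` I" "A \<noteq> B"
      then obtain i j where "A = P i" "B = P j" "i \<noteq> j" by auto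
      then show "A \<inter> B = {}" using disj by blast
    qed
  qed
  then have "L2_set (\<lambda>s. cs s v) (P ` I) \<le> norm v" by (rule N1)
  then have "(L2_set (\<lambda>s. cs s v) (P ` I))\<^sup>2 \<le> (norm v)\<^sup>2"
    by (intro power_mono) (auto simp: L2_set_nonneg)
  then have "(\<Sum>s\<in>P ` I. (cs s v)\<^sup>2) \<le> (norm v)\<^sup>2"
    unfolding L2_set_def by (simp add: sum_nonneg)
  finally show ?thesis .
qed

lemma N2sq:
  assumes "e > 0"
  shows "\<exists>F\<in>fam S. (\<Sum>s\<in>F. (cs s x)\<^sup>2) > (norm x)\<^sup>2 - e"
proof (cases "x = 0")
  case True
  then show ?thesis using fam_ne[of S] assms by (intro bexI[of _ "{}"]) auto
next
  case False
  then have nx: "norm x > 0" by simp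
  define \<eta> where "\<eta> = min (norm x) (e / (2 * norm x))"
  have \<eta>0: "\<eta> > 0" unfolding \<eta>_def using nx assms by simp
  obtain F where F: "F \<in> fam S" "L2_set (\<lambda>s. cs s x) F > norm x - \<eta>" using N2[OF \<eta>0] by blast
  have h1: "norm x - \<eta> \<ge> 0" unfolding \<eta>_def by simp
  have "(norm x - \<eta>)\<^sup>2 < (L2_set (\<lambda>s. cs s x) F)\<^sup>2"
    by (rule power_strict_mono[OF F(2) h1]) simp
  also have "(L2_set (\<lambda>s. cs s x) F)\<^sup>2 = (\<Sum>s\<in>F. (cs s x)\<^sup>2)"
    unfolding L2_set_def by (simp add: sum_nonneg)
  finally have 1: "(norm x - \<eta>)\<^sup>2 < (\<Sum>s\<in>F. (cs s x)\<^sup>2)" .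
  have "2 * \<eta> * norm x \<le> e"
  proof -
    have "\<eta> \<le> e / (2 * norm x)" unfolding \<eta>_def by simp
    then have "\<eta> * (2 * norm x) \<le> e" using nx by (simp add: pos_le_divide_eq)
    then show ?thesis by (simp add: algebra_simps)
  qed
  moreover have "(norm x - \<eta>)\<^sup>2 = (norm x)\<^sup>2 - 2 * \<eta> * norm x + \<eta>\<^sup>2"
    by (simp add: power2_diff algebra_simps)
  moreover have "\<eta>\<^sup>2 \<ge> 0" by simp
  ultimately have "(norm x)\<^sup>2 - e \<le> (norm x - \<eta>)\<^sup>2" by linarith
  then show ?thesis using 1 F(1) by force
qed

end

locale jsc2 = jsc +
  assumes pc: "pointwise_closed S"
begin

definition Sc0 where "Sc0 = (\<lambda>s. (\<lambda>a. a \<in> s)) ` S0"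

lemma Sc0_closed: "closed Sc0"
proof -
  have "Sc0 = {p. \<forall>a. p a = False} \<union> {(\<lambda>a. a \<in> s) | s. s \<in> S}"
    unfolding Sc0_def S0_def by auto
  moreover have "closed {p::'g\<Rightarrow>bool. \<forall>a. p a = False}"
  proof (rule closed_Collect_all)
    fix a
    have "{p::'g\<Rightarrow>bool. p a = False} = (\<lambda>p. p a) -` {False}" by auto
    then show "closed {p::'g\<Rightarrow>bool. p a = False}"
      using closed_vimage[OF bool_closed coord1_cont] by simp
  qed
  moreover have "closed {(\<lambda>a. a \<in> s) | s. s \<in> S}" using pc unfolding pointwise_closed_def .
  ultimately show ?thesis by auto
qed

lemma Sc0_set: "p \<in> Sc0 \<Longrightarrow> {a. p a} \<in> S0 \<and> p = (\<lambda>a. a \<in> {a. p a})"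
  unfolding Sc0_def by auto

end



lemma lin_aux: "(a::real) \<le> W + b \<Longrightarrow> b \<le> c \<Longrightarrow> c \<le> d \<Longrightarrow> e \<le> d \<Longrightarrow> d + d = f \<Longrightarrow> n - e < a \<Longrightarrow> n - f \<le> W"
  by linarith

context jsc2 begin

lemma attain:
  "\<exists>P. (\<forall>i. P i \<in> S0) \<and> (\<forall>i j. i \<noteq> j \<longrightarrow> P i \<inter> P j = {}) \<and> (\<lambda>i. (cs (P i) x)\<^sup>2) sums (norm x)\<^sup>2"
proof -
  have "\<forall>k. \<exists>\<psi>. fin_supp \<psi> \<and> norm (x - E \<psi>) < 1 / real (Suc k)"
    using approx by simp
  then obtain \<phi> where \<phi>: "\<And>k. fin_supp (\<phi> k)" "\<And>k. norm (x - E (\<phi> k)) < 1 / real (Suc k)"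
    by metis
  define A where "A = insert undefined (\<Union>k. {a. \<phi> k a \<noteq> 0})"
  have "countable (\<Union>k. {a. \<phi> k a \<noteq> 0})"
    by (rule countable_UN) (use \<phi>(1) in \<open>auto simp: fin_supp_def intro: countable_finite\<close>)
  then have cA: "countable A" unfolding A_def by simp
  define en where "en = from_nat_into A"
  have ren: "range en = A" unfolding en_def by (rule range_from_nat_into[OF _ cA]) (simp add: A_def)
  have "\<forall>k. \<exists>N. {a. \<phi> k a \<noteq> 0} \<subseteq> en ` {..N}"
  proof
    fix k show "\<exists>N. {a. \<phi> k a \<noteq> 0} \<subseteq> en ` {..N}"
      by (rule finite_in_range_prefix) (use \<phi>(1)[of k] ren in \<open>auto simp: fin_supp_def A_def\<close>)
  qed
  then obtain Nk where Nk: "\<And>k. {a. \<phi> k a \<noteq> 0} \<subseteq> en ` {..Nk k}" by metis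
  define c where "c p = cs {a. p a} x" for p :: "'a \<Rightarrow> bool"
  define ck where "ck k p = (\<Sum>a\<in>{a. \<phi> k a \<noteq> 0}. if p a then \<phi> k a else 0)" for k and p :: "'a \<Rightarrow> bool"
  have ck_cont: "continuous_on Sc0 (ck k)" for k
    unfolding ck_def
    by (intro continuous_on_sum continuous_on_compose2[OF bool_cont coord1_cont]) auto
  have ck_eq: "ck k p = cs {a. p a} (E (\<phi> k))" if "p \<in> Sc0" for k p
  proof -
    have s0: "{a. p a} \<in> S0" using Sc0_set[OF that] by blast
    have "cs {a. p a} (E (\<phi> k)) = ssum (\<phi> k) {a. p a}" by (rule cs_E[OF s0 \<phi>(1)])
    also have "\<dots> = sum (\<phi> k) ({a. \<phi> k a \<noteq> 0} \<inter> {a. p a})"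
      unfolding ssum_def by (simp add: Int_commute)
    also have "\<dots> = ck k p" unfolding ck_def
      using \<phi>(1)[of k] unfolding fin_supp_def by (subst sum.inter_restrict) auto
    finally show ?thesis by simp
  qed
  have c_cont: "continuous_on Sc0 c"
  proof (rule uniform_limit_theorem[of _ ck])
    show "\<forall>\<^sub>F k in sequentially. continuous_on Sc0 (ck k)" using ck_cont by simp
    show "uniform_limit Sc0 ck c sequentially"
      unfolding uniform_limit_iff
    proof (intro allI impI)
      fix e :: real assume "e > 0"
      then obtain N where N: "inverse (real (Suc N)) < e" using reals_Archimedean by blast
      show "\<forall>\<^sub>F k in sequentially. \<forall>p\<in>Sc0. dist (ck k p) (c p) < e"
      proof (rule eventually_sequentiallyI[of N], intro ballI)
        fix k p assume "N \<le> k" "p \<in> Sc0"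
        have s0: "{a. p a} \<in> S0" using Sc0_set[OF \<open>p \<in> Sc0\<close>] by blast
        have "dist (ck k p) (c p) = \<bar>cs {a. p a} (E (\<phi> k) - x)\<bar>"
          unfolding c_def ck_eq[OF \<open>p \<in> Sc0\<close>] dist_real_def cs_diff[OF s0] ..
        also have "\<dots> \<le> norm (E (\<phi> k) - x)" by (rule cs_bd[OF s0])
        also have "\<dots> < 1 / real (Suc k)" using \<phi>(2)[of k] by (simp add: norm_minus_commute)
        also have "\<dots> \<le> inverse (real (Suc N))" using \<open>N \<le> k\<close> by (simp add: divide_simps)
        finally show "dist (ck k p) (c p) < e" using N by simp
      qed
    qed
  qed simp
  define D where "D = {Q::nat \<Rightarrow> 'a \<Rightarrow> bool. (\<forall>i. Q i \<in> Sc0) \<and> (\<forall>i j a. i \<noteq> j \<longrightarrow> \<not> (Q i a \<and> Q j a))}"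
  have D_closed: "closed D"
  proof -
    have c1: "closed {Q::nat \<Rightarrow> 'a \<Rightarrow> bool. \<forall>i. Q i \<in> Sc0}"
    proof (rule closed_Collect_all)
      fix i
      have "{Q::nat \<Rightarrow> 'a \<Rightarrow> bool. Q i \<in> Sc0} = (\<lambda>Q. Q i) -` Sc0" by auto
      then show "closed {Q::nat \<Rightarrow> 'a \<Rightarrow> bool. Q i \<in> Sc0}"
        using closed_vimage[OF Sc0_closed coordQ_cont] by simp
    qed
    have c2: "closed {Q::nat \<Rightarrow> 'a \<Rightarrow> bool. \<forall>i j a. i \<noteq> j \<longrightarrow> \<not> (Q i a \<and> Q j a)}"
    proof (intro closed_Collect_all)
      fix i j :: nat and a :: 'a
      show "closed {Q::nat \<Rightarrow> 'a \<Rightarrow> bool. i \<noteq> j \<longrightarrow> \<not> (Q i a \<and> Q j a)}"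
      proof (cases "i = j")
        case True then show ?thesis by simp
      next
        case False
        have "{Q::nat \<Rightarrow> 'a \<Rightarrow> bool. i \<noteq> j \<longrightarrow> \<not> (Q i a \<and> Q j a)} =
          (\<lambda>Q. Q i a) -` {False} \<union> (\<lambda>Q. Q j a) -` {False}" using False by auto
        then show ?thesis
          using closed_vimage[OF bool_closed[of "{False}"] coord2_cont[of UNIV i a]]
                closed_vimage[OF bool_closed[of "{False}"] coord2_cont[of UNIV j a]] by auto
      qed
    qed
    have "D = {Q. \<forall>i. Q i \<in> Sc0} \<inter> {Q. \<forall>i j a. i \<noteq> j \<longrightarrow> \<not> (Q i a \<and> Q j a)}"
      unfolding D_def by auto
    then show ?thesis using c1 c2 by auto
  qed
  have D_compact: "compact D"
  proof -
    have "compact (UNIV :: ('a \<Rightarrow> bool) set)" by (rule compact_UNIV_fun[OF compact_UNIV_bool])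
    then have "compact (UNIV :: (nat \<Rightarrow> 'a \<Rightarrow> bool) set)" by (rule compact_UNIV_fun)
    from compact_Int_closed[OF this D_closed] show ?thesis by simp
  qed
  define W where "W N Q = (\<Sum>i<N. (c (Q i))\<^sup>2)" for N and Q :: "nat \<Rightarrow> 'a \<Rightarrow> bool"
  have W_cont: "continuous_on D (W N)" for N
    unfolding W_def
  proof (intro continuous_on_sum continuous_intros)
    fix i
    show "continuous_on D (\<lambda>Q. c (Q i))"
      by (rule continuous_on_compose2[OF c_cont coordQ_cont]) (auto simp: D_def)
  qed
  define G where "G m = {Q\<in>D. (norm x)\<^sup>2 - 1 / real (Suc m) \<le> W (Suc (Nk (2*m+1))) Q}" for m
  have G_closed: "closed (G m)" for m
    unfolding G_def by (rule continuous_on_closed_Collect_le[OF continuous_on_const W_cont D_closed])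
  define canon where "canon F i = (\<lambda>b. \<exists>s\<in>F. b \<in> s \<and> en i \<in> s \<and> (\<forall>j<i. en j \<notin> s))"
    for F :: "'a set set" and i
  have canon_eq: "canon F i = (\<lambda>a. a \<in> s)"
    if "F \<in> fam S" "s \<in> F" "en i \<in> s" "\<forall>j<i. en j \<notin> s" for F s i
  proof
    fix b
    have dF: "disjoint F" using that(1) unfolding fam_def by auto
    show "canon F i b = (b \<in> s)"
    proof
      assume "canon F i b"
      then obtain s' where s': "s' \<in> F" "b \<in> s'" "en i \<in> s'" unfolding canon_def by auto
      then have "s' = s" using dF that(2,3) unfolding disjoint_def by blast
      then show "b \<in> s" using s' by simp
    next
      assume "b \<in> s" then show "canon F i b" unfolding canon_def using that by blast
    qed
  qed
  have canon_D: "canon F \<in> D" if F: "F \<in> fam S" for F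
    unfolding D_def
  proof (intro CollectI conjI allI impI)
    fix i :: nat
    show "canon F i \<in> Sc0"
    proof (cases "\<exists>s\<in>F. en i \<in> s \<and> (\<forall>j<i. en j \<notin> s)")
      case True
      then obtain s where s: "s \<in> F" "en i \<in> s" "\<forall>j<i. en j \<notin> s" by blast
      have "s \<in> S0" using s(1) F unfolding fam_def S0_def by auto
      then show ?thesis unfolding canon_eq[OF F s] Sc0_def by auto
    next
      case False
      then have "canon F i = (\<lambda>a. a \<in> {})" unfolding canon_def by auto
      then show ?thesis unfolding Sc0_def S0_def by auto
    qed
  next
    fix i j :: nat and a assume "i \<noteq> j"
    show "\<not> (canon F i a \<and> canon F j a)"
    proof
      assume "canon F i a \<and> canon F j a"
      then obtain s s' where s: "s \<in> F" "a \<in> s" "en i \<in> s" "\<forall>l<i. en l \<notin> s"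
        and s': "s' \<in> F" "a \<in> s'" "en j \<in> s'" "\<forall>l<j. en l \<notin> s'"
        unfolding canon_def by blast
      have "disjoint F" using F unfolding fam_def by auto
      then have "s = s'" using s s' unfolding disjoint_def by blast
      then show False using s s' \<open>i \<noteq> j\<close> by (metis linorder_neqE_nat)
    qed
  qed
  have canon_W: "(\<Sum>s\<in>F. (cs s x)\<^sup>2) \<le> W (Suc (Nk k)) (canon F) + (norm (x - E (\<phi> k)))\<^sup>2"
    if F: "F \<in> fam S" for F k
  proof -
    have fF: "finite F" and FS: "F \<subseteq> S" and dF: "disjoint F" using F unfolding fam_def by auto
    define F1 where "F1 = {s\<in>F. \<exists>i\<le>Nk k. en i \<in> s}"
    define F2 where "F2 = F - F1"
    have split: "(\<Sum>s\<in>F. (cs s x)\<^sup>2) = (\<Sum>s\<in>F1. (cs s x)\<^sup>2) + (\<Sum>s\<in>F2. (cs s x)\<^sup>2)"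
    proof -
      have "F1 \<subseteq> F" by (auto simp: F1_def)
      from sum.subset_diff[OF this fF] show ?thesis unfolding F2_def by (simp add: add.commute)
    qed
    have part2: "(\<Sum>s\<in>F2. (cs s x)\<^sup>2) \<le> (norm (x - E (\<phi> k)))\<^sup>2"
    proof -
      have F2fam: "F2 \<in> fam S" by (rule fam_subset[OF F]) (auto simp: F2_def)
      have eq: "cs s x = cs s (x - E (\<phi> k))" if "s \<in> F2" for s
      proof -
        have sS0: "s \<in> S0" using that FS unfolding F2_def S0_def by auto
        have "s \<inter> {a. \<phi> k a \<noteq> 0} = {}"
        proof (rule ccontr)
          assume "s \<inter> {a. \<phi> k a \<noteq> 0} \<noteq> {}"
          then obtain a where "a \<in> s" "\<phi> k a \<noteq> 0" by auto
          then obtain i where "i \<le> Nk k" "a = en i" using Nk[of k] by auto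
          then show False using that \<open>a \<in> s\<close> unfolding F2_def F1_def by auto
        qed
        then have "ssum (\<phi> k) s = 0" unfolding ssum_def by simp
        then show ?thesis using cs_E[OF sS0 \<phi>(1)] cs_diff[OF sS0] by simp
      qed
      have "(\<Sum>s\<in>F2. (cs s x)\<^sup>2) = (L2_set (\<lambda>s. cs s (x - E (\<phi> k))) F2)\<^sup>2"
        unfolding L2_set_def by (simp add: sum_nonneg eq)
      also have "\<dots> \<le> (norm (x - E (\<phi> k)))\<^sup>2"
        by (intro power_mono N1[OF F2fam]) (simp add: L2_set_nonneg)
      finally show ?thesis .
    qed
    define idx where "idx s = (LEAST i. en i \<in> s)" for s
    have idx: "idx s \<le> Nk k" "en (idx s) \<in> s" "\<forall>j<idx s. en j \<notin> s" if s1: "s \<in> F1" for s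
    proof -
      obtain i where i: "i \<le> Nk k" "en i \<in> s" using s1 unfolding F1_def by auto
      show "en (idx s) \<in> s" unfolding idx_def by (rule LeastI[of _ i]) (use i in simp)
      show "idx s \<le> Nk k" unfolding idx_def using Least_le[of "\<lambda>i. en i \<in> s" i] i by simp
      show "\<forall>j<idx s. en j \<notin> s" unfolding idx_def using not_less_Least by blast
    qed
    have inj: "inj_on idx F1"
    proof (rule inj_onI)
      fix s s' assume "s \<in> F1" "s' \<in> F1" "idx s = idx s'"
      then have "en (idx s) \<in> s \<inter> s'" using idx(2)[of s] idx(2)[of s'] by simp
      moreover have "s \<in> F" "s' \<in> F" using \<open>s \<in> F1\<close> \<open>s' \<in> F1\<close> unfolding F1_def by auto
      ultimately show "s = s'" using dF unfolding disjoint_def by blast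
    qed
    have cq: "c (canon F (idx s)) = cs s x" if "s \<in> F1" for s
    proof -
      have "s \<in> F" using that unfolding F1_def by auto
      then have "canon F (idx s) = (\<lambda>a. a \<in> s)" using canon_eq[OF F _ idx(2,3)[OF that]] by blast
      then show ?thesis unfolding c_def by simp
    qed
    have "(\<Sum>s\<in>F1. (cs s x)\<^sup>2) = (\<Sum>s\<in>F1. (c (canon F (idx s)))\<^sup>2)"
      by (rule sum.cong) (auto simp: cq)
    also have "\<dots> = (\<Sum>i\<in>idx ` F1. (c (canon F i))\<^sup>2)"
      by (simp add: sum.reindex[OF inj])
    also have "\<dots> \<le> (\<Sum>i<Suc (Nk k). (c (canon F i))\<^sup>2)"
      by (rule sum_mono2) (use idx(1) in \<open>auto simp: less_Suc_eq_le\<close>)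
    finally have part1: "(\<Sum>s\<in>F1. (cs s x)\<^sup>2) \<le> W (Suc (Nk k)) (canon F)" unfolding W_def .
    show ?thesis using split part1 part2 by simp
  qed
  have "D \<inter> \<Inter>(range G) \<noteq> {}"
  proof (rule compact_imp_fip[OF D_compact])
    show "closed T" if "T \<in> range G" for T using that G_closed by auto
  next
    fix F' assume F': "finite F'" "F' \<subseteq> range G"
    then obtain M where M: "finite M" "F' = G ` M" using finite_subset_image by metis
    define m0 where "m0 = Max (insert 0 M)"
    have m0: "m \<le> m0" if "m \<in> M" for m unfolding m0_def using M(1) that by simp
    have "(0::real) < 1 / (2 * real (Suc m0))" by simp
    then obtain F where F: "F \<in> fam S" "(\<Sum>s\<in>F. (cs s x)\<^sup>2) > (norm x)\<^sup>2 - 1 / (2 * real (Suc m0))"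
      using N2sq by blast
    have "canon F \<in> G m" if "m \<in> M" for m
    proof -
      have 1: "(\<Sum>s\<in>F. (cs s x)\<^sup>2) \<le> W (Suc (Nk (2*m+1))) (canon F) + (norm (x - E (\<phi> (2*m+1))))\<^sup>2"
        by (rule canon_W[OF F(1)])
      have 2: "(norm (x - E (\<phi> (2*m+1))))\<^sup>2 \<le> (1 / real (Suc (2*m+1)))\<^sup>2"
        by (rule power_mono) (use \<phi>(2)[of "2*m+1"] in auto)
      have 3: "(1 / real (Suc (2*m+1)))\<^sup>2 \<le> 1 / (2 * real (Suc m))"
      proof -
        have "(1 / real (Suc (2*m+1)))\<^sup>2 = (1 / (2 * real (Suc m))) * (1 / (2 * real (Suc m)))"
          by (simp add: power2_eq_square)
        also have "\<dots> \<le> 1 / (2 * real (Suc m)) * 1"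
          by (rule mult_left_mono) (auto simp: divide_simps)
        finally show ?thesis by simp
      qed
      have 4: "1 / (2 * real (Suc m0)) \<le> 1 / (2 * real (Suc m))"
        using m0[OF that] by (simp add: divide_simps)
      have 5: "1 / (2 * real (Suc m)) + 1 / (2 * real (Suc m)) = 1 / real (Suc m)"
        by (simp add: divide_simps)
      have "(norm x)\<^sup>2 - 1 / real (Suc m) \<le> W (Suc (Nk (2*m+1))) (canon F)"
        using lin_aux[OF 1 2 3 4 5 F(2)] .
      then show ?thesis unfolding G_def using canon_D[OF F(1)] by simp
    qed
    then have "canon F \<in> D \<inter> \<Inter>F'" using canon_D[OF F(1)] M(2) by auto
    then show "D \<inter> \<Inter>F' \<noteq> {}" by blast
  qed
  then obtain Q where Q: "Q \<in> D" "\<And>m. Q \<in> G m" by blast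
  define P where "P i = {a. Q i a}" for i
  have PS0: "P i \<in> S0" for i using Q(1) Sc0_set unfolding D_def P_def by blast
  have Pdisj: "P i \<inter> P j = {}" if "i \<noteq> j" for i j using Q(1) that unfolding D_def P_def by blast
  have cQ: "c (Q i) = cs (P i) x" for i unfolding c_def P_def ..
  have bound: "(\<Sum>i<N. (cs (P i) x)\<^sup>2) \<le> (norm x)\<^sup>2" for N by (rule fin_bessel[OF PS0 Pdisj])
  have summ: "summable (\<lambda>i. (cs (P i) x)\<^sup>2)" by (rule summableI_nonneg_bounded[OF _ bound]) simp
  have le: "(\<Sum>i. (cs (P i) x)\<^sup>2) \<le> (norm x)\<^sup>2" by (rule suminf_le_const[OF summ bound])
  have ge: "(norm x)\<^sup>2 - 1 / real (Suc m) \<le> (\<Sum>i. (cs (P i) x)\<^sup>2)" for m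
  proof -
    have "(norm x)\<^sup>2 - 1 / real (Suc m) \<le> W (Suc (Nk (2*m+1))) Q" using Q(2)[of m] unfolding G_def by simp
    also have "\<dots> = (\<Sum>i<Suc (Nk (2*m+1)). (cs (P i) x)\<^sup>2)" unfolding W_def cQ ..
    also have "\<dots> \<le> (\<Sum>i. (cs (P i) x)\<^sup>2)" by (rule sum_le_suminf[OF summ]) auto
    finally show ?thesis .
  qed
  have "(\<Sum>i. (cs (P i) x)\<^sup>2) = (norm x)\<^sup>2"
  proof (rule antisym[OF le], rule ccontr)
    assume "\<not> (norm x)\<^sup>2 \<le> (\<Sum>i. (cs (P i) x)\<^sup>2)"
    then have gap: "(norm x)\<^sup>2 - (\<Sum>i. (cs (P i) x)\<^sup>2) > 0" by simp
    then obtain m where "inverse (real (Suc m)) < (norm x)\<^sup>2 - (\<Sum>i. (cs (P i) x)\<^sup>2)"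
      using reals_Archimedean by blast
    then show False using ge[of m] by (simp add: inverse_eq_divide)
  qed
  then have "(\<lambda>i. (cs (P i) x)\<^sup>2) sums (norm x)\<^sup>2" using summ summable_sums by fastforce
  then show ?thesis using PS0 Pdisj by blast
qed

end



lemma amgm:
  fixes a b t :: real
  assumes "t > 0"
  shows "\<bar>a * b\<bar> \<le> (t * a\<^sup>2 + b\<^sup>2 / t) / 2"
proof -
  have "0 \<le> (t * \<bar>a\<bar> - \<bar>b\<bar>)\<^sup>2" by simp
  then have "2 * t * (\<bar>a\<bar> * \<bar>b\<bar>) \<le> t * (t * a\<^sup>2) + b\<^sup>2"
    by (simp add: power2_diff power_mult_distrib algebra_simps power2_eq_square)
  then have "2 * t * (\<bar>a\<bar> * \<bar>b\<bar>) \<le> t * (t * a\<^sup>2 + b\<^sup>2 / t)"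
    using assms by (simp add: algebra_simps)
  then have "2 * (\<bar>a\<bar> * \<bar>b\<bar>) \<le> t * a\<^sup>2 + b\<^sup>2 / t"
    using assms by (simp add: mult.assoc)
  then show ?thesis by (simp add: abs_mult)
qed

lemma l2_summable_abs:
  fixes a b :: "nat \<Rightarrow> real"
  assumes "summable (\<lambda>i. (a i)\<^sup>2)" "summable (\<lambda>i. (b i)\<^sup>2)"
  shows "summable (\<lambda>i. \<bar>a i * b i\<bar>)"
proof (rule summable_comparison_test[where g="\<lambda>i. (1 * (a i)\<^sup>2 + (b i)\<^sup>2 / 1) / 2"])
  show "\<exists>N. \<forall>n\<ge>N. norm \<bar>a n * b n\<bar> \<le> (1 * (a n)\<^sup>2 + (b n)\<^sup>2 / 1) / 2"
    using amgm[of 1] by auto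
  show "summable (\<lambda>i. (1 * (a i)\<^sup>2 + (b i)\<^sup>2 / 1) / 2)"
    using assms by (intro summable_divide summable_add) auto
qed

lemma l2_summable:
  fixes a b :: "nat \<Rightarrow> real"
  assumes "summable (\<lambda>i. (a i)\<^sup>2)" "summable (\<lambda>i. (b i)\<^sup>2)"
  shows "summable (\<lambda>i. a i * b i)"
  using summable_rabs_cancel[OF l2_summable_abs[OF assms]] .

lemma l2_bound:
  fixes a b :: "nat \<Rightarrow> real"
  assumes "summable (\<lambda>i. (a i)\<^sup>2)" "summable (\<lambda>i. (b i)\<^sup>2)" "t > 0"
  shows "\<bar>\<Sum>i. a i * b i\<bar> \<le> (t * (\<Sum>i. (a i)\<^sup>2) + (\<Sum>i. (b i)\<^sup>2) / t) / 2"
proof -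
  have s1: "summable (\<lambda>i. (t * (a i)\<^sup>2 + (b i)\<^sup>2 / t) / 2)"
    using assms by (intro summable_divide summable_add summable_mult) auto
  have "\<bar>\<Sum>i. a i * b i\<bar> \<le> (\<Sum>i. \<bar>a i * b i\<bar>)"
    by (rule summable_rabs[OF l2_summable_abs[OF assms(1,2)]])
  also have "\<dots> \<le> (\<Sum>i. (t * (a i)\<^sup>2 + (b i)\<^sup>2 / t) / 2)"
    by (rule suminf_le[OF _ l2_summable_abs[OF assms(1,2)] s1]) (rule amgm[OF assms(3)])
  also have "\<dots> = (t * (\<Sum>i. (a i)\<^sup>2) + (\<Sum>i. (b i)\<^sup>2) / t) / 2"
  proof -
    have m1: "summable (\<lambda>i. t * (a i)\<^sup>2)" by (rule summable_mult[OF assms(1)])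
    have m2: "summable (\<lambda>i. (b i)\<^sup>2 / t)" by (rule summable_divide[OF assms(2)])
    have e1: "(\<Sum>i. t * (a i)\<^sup>2) = t * (\<Sum>i. (a i)\<^sup>2)" by (rule suminf_mult[OF assms(1)])
    have e2: "(\<Sum>i. (b i)\<^sup>2 / t) = (\<Sum>i. (b i)\<^sup>2) / t" by (rule suminf_divide[OF assms(2)])
    have e3: "(\<Sum>i. t * (a i)\<^sup>2 + (b i)\<^sup>2 / t) = (\<Sum>i. t * (a i)\<^sup>2) + (\<Sum>i. (b i)\<^sup>2 / t)"
      by (rule suminf_add[OF m1 m2, symmetric])
    have e4: "(\<Sum>i. (t * (a i)\<^sup>2 + (b i)\<^sup>2 / t) / 2) = (\<Sum>i. t * (a i)\<^sup>2 + (b i)\<^sup>2 / t) / 2"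
      by (rule suminf_divide[OF summable_add[OF m1 m2]])
    show ?thesis using e1 e2 e3 e4 by simp
  qed
  finally show ?thesis .
qed

lemma l2_tail_conv:
  fixes a :: "nat \<Rightarrow> real" and b :: "nat \<Rightarrow> nat \<Rightarrow> real"
  assumes sa: "summable (\<lambda>i. (a i)\<^sup>2)"
    and sb: "\<And>n. summable (\<lambda>i. (b n i)\<^sup>2)" and bC: "\<And>n. (\<Sum>i. (b n i)\<^sup>2) \<le> C"
    and lim: "\<And>i. (\<lambda>n. b n i) \<longlonglongrightarrow> 0"
  shows "(\<lambda>n. \<Sum>i. a i * b n i) \<longlonglongrightarrow> 0"
proof (rule LIMSEQ_I)
  fix e :: real assume e: "e > 0"
  have C0: "C \<ge> 0" using bC[of 0] suminf_nonneg[OF sb[of 0]] by (meson order_trans zero_le_power2)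
  define t where "t = max 1 (2 * C / e)"
  have t0: "t > 0" unfolding t_def by simp
  have tC: "C / t \<le> e / 2"
  proof -
    have "2 * C / e \<le> t" unfolding t_def by simp
    then have "2 * C \<le> t * e" using e by (simp add: divide_le_eq)
    then have "C \<le> e / 2 * t" by (simp add: algebra_simps)
    then show ?thesis using pos_divide_le_eq[OF t0] by blast
  qed
  have "e / (2 * t) > 0" using e t0 by simp
  then obtain N where N: "\<And>n. n \<ge> N \<Longrightarrow> norm (\<Sum>i. (a (i + n))\<^sup>2) < e / (2 * t)"
    using suminf_exist_split[OF _ sa] by blast
  have head: "(\<lambda>n. \<Sum>i<N. a i * b n i) \<longlonglongrightarrow> 0"
    using lim by (auto intro!: tendsto_null_sum tendsto_mult_right_zero)
  then obtain M where M: "\<And>n. n \<ge> M \<Longrightarrow> norm (\<Sum>i<N. a i * b n i) < e / 2"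
    using LIMSEQ_D[OF head, of "e/2"] e by auto
  show "\<exists>no. \<forall>n\<ge>no. norm ((\<Sum>i. a i * b n i) - 0) < e"
  proof (intro exI allI impI)
    fix n assume "n \<ge> M"
    have sab: "summable (\<lambda>i. a i * b n i)" by (rule l2_summable[OF sa sb])
    have sa': "summable (\<lambda>i. (a (i + N))\<^sup>2)" using summable_iff_shift[of "\<lambda>i. (a i)\<^sup>2" N] sa by simp
    have sb': "summable (\<lambda>i. (b n (i + N))\<^sup>2)" using summable_iff_shift[of "\<lambda>i. (b n i)\<^sup>2" N] sb[of n] by simp
    have split: "(\<Sum>i. a i * b n i) = (\<Sum>i. a (i + N) * b n (i + N)) + (\<Sum>i<N. a i * b n i)"
      by (rule suminf_split_initial_segment[OF sab])
    have tailb: "(\<Sum>i. (b n (i + N))\<^sup>2) \<le> C"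
    proof -
      have "(\<Sum>i. (b n i)\<^sup>2) = (\<Sum>i. (b n (i + N))\<^sup>2) + (\<Sum>i<N. (b n i)\<^sup>2)"
        by (rule suminf_split_initial_segment[OF sb])
      moreover have "(\<Sum>i<N. (b n i)\<^sup>2) \<ge> 0" by (simp add: sum_nonneg)
      ultimately show ?thesis using bC[of n] by linarith
    qed
    have ta: "(\<Sum>i. (a (i + N))\<^sup>2) < e / (2 * t)" using N[of N] by simp
    have "\<bar>\<Sum>i. a (i + N) * b n (i + N)\<bar> \<le> (t * (\<Sum>i. (a (i + N))\<^sup>2) + (\<Sum>i. (b n (i + N))\<^sup>2) / t) / 2"
      by (rule l2_bound[OF sa' sb' t0])
    also have "\<dots> \<le> (t * (e / (2 * t)) + C / t) / 2"
      using ta tailb t0 by (intro divide_right_mono add_mono mult_left_mono divide_right_mono) auto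
    also have "\<dots> \<le> (e / 2 + e / 2) / 2" using tC t0 by simp
    finally have tail: "\<bar>\<Sum>i. a (i + N) * b n (i + N)\<bar> \<le> e / 2" by simp
    show "norm ((\<Sum>i. a i * b n i) - 0) < e"
      using split tail M[OF \<open>n \<ge> M\<close>] by simp
  qed
qed




context jsc begin

lemma bessel:
  assumes P: "\<And>i. P i \<in> S0" and disj: "\<And>i j. i \<noteq> j \<Longrightarrow> P i \<inter> P j = {}"
  shows "summable (\<lambda>i. (cs (P i) v)\<^sup>2) \<and> (\<Sum>i. (cs (P i) v)\<^sup>2) \<le> (norm v)\<^sup>2"
proof -
  have b: "(\<Sum>i<N. (cs (P i) v)\<^sup>2) \<le> (norm v)\<^sup>2" for N by (rule fin_bessel[OF P disj])
  have s: "summable (\<lambda>i. (cs (P i) v)\<^sup>2)" by (rule summableI_nonneg_bounded[OF _ b]) simp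
  show ?thesis using s suminf_le_const[OF s b] by simp
qed

lemma cs_zero: "s \<in> S0 \<Longrightarrow> cs s 0 = 0"
  using linear_0[OF bounded_linear.linear[OF cs_bl]] by blast

end

context jsc2 begin

lemma norming:
  "\<exists>k. bounded_linear k \<and> (\<forall>v. k v \<le> norm v) \<and> k x = norm x \<and>
     (\<forall>y C. (\<forall>n. norm (y n) \<le> C) \<longrightarrow> (\<forall>s\<in>S. (\<lambda>n. cs s (y n)) \<longlonglongrightarrow> 0) \<longrightarrow> (\<lambda>n. k (y n)) \<longlonglongrightarrow> 0)"
proof (cases "x = 0")
  case True
  show ?thesis
    by (rule exI[of _ "\<lambda>_. 0"]) (simp add: True bounded_linear_zero)
next
  case False
  then have nx: "norm x > 0" by simp
  obtain P where P: "\<And>i. P i \<in> S0" "\<And>i j. i \<noteq> j \<Longrightarrow> P i \<inter> P j = {}"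
    and Ps: "(\<lambda>i. (cs (P i) x)\<^sup>2) sums (norm x)\<^sup>2" using attain by blast
  define a where "a i = cs (P i) x / norm x" for i
  have a2: "(\<lambda>i. (a i)\<^sup>2) sums ((norm x)\<^sup>2 / (norm x)\<^sup>2)"
    unfolding a_def power_divide by (rule sums_divide[OF Ps])
  then have sa: "summable (\<lambda>i. (a i)\<^sup>2)" and sa1: "(\<Sum>i. (a i)\<^sup>2) = 1"
    using nx by (auto simp: sums_iff)
  have sb: "summable (\<lambda>i. (cs (P i) v)\<^sup>2)" and sbv: "(\<Sum>i. (cs (P i) v)\<^sup>2) \<le> (norm v)\<^sup>2" for v
    using bessel[OF P] by auto
  define k where "k v = (\<Sum>i. a i * cs (P i) v)" for v
  have sab: "summable (\<lambda>i. a i * cs (P i) v)" for v by (rule l2_summable[OF sa sb])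
  have kadd: "k (v + w) = k v + k w" for v w
  proof -
    have "k (v + w) = (\<Sum>i. a i * cs (P i) v + a i * cs (P i) w)"
      unfolding k_def by (simp add: cs_add[OF P(1)] algebra_simps)
    also have "\<dots> = k v + k w" unfolding k_def by (rule suminf_add[OF sab sab, symmetric])
    finally show ?thesis .
  qed
  have kscale: "k (c *\<^sub>R v) = c * k v" for c v
  proof -
    have "k (c *\<^sub>R v) = (\<Sum>i. c * (a i * cs (P i) v))"
      unfolding k_def by (simp add: cs_scale[OF P(1)] algebra_simps)
    also have "\<dots> = c * k v" unfolding k_def by (rule suminf_mult[OF sab])
    finally show ?thesis .
  qed
  have kabs: "\<bar>k v\<bar> \<le> norm v" for v
  proof (cases "v = 0")
    case True then show ?thesis unfolding k_def by (simp add: cs_zero[OF P(1)])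
  next
    case False
    then have nv: "norm v > 0" by simp
    have "\<bar>k v\<bar> \<le> (norm v * (\<Sum>i. (a i)\<^sup>2) + (\<Sum>i. (cs (P i) v)\<^sup>2) / norm v) / 2"
      unfolding k_def by (rule l2_bound[OF sa sb nv])
    also have "\<dots> \<le> (norm v * 1 + (norm v)\<^sup>2 / norm v) / 2"
      using sa1 sbv[of v] nv by (intro divide_right_mono add_mono divide_right_mono) auto
    also have "\<dots> = norm v" using nv by (simp add: power2_eq_square)
    finally show ?thesis .
  qed
  have kbl: "bounded_linear k"
    by (rule bounded_linear_intro[of _ 1]) (use kadd kscale kabs in auto)
  have kx: "k x = norm x"
  proof -
    have "k x = (\<Sum>i. (cs (P i) x)\<^sup>2 / norm x)"
      unfolding k_def a_def by (simp add: power2_eq_square)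
    also have "\<dots> = (norm x)\<^sup>2 / norm x" using sums_divide[OF Ps, of "norm x"] by (simp add: sums_iff)
    also have "\<dots> = norm x" by (simp add: power2_eq_square)
    finally show ?thesis .
  qed
  have kconv: "(\<lambda>n. k (y n)) \<longlonglongrightarrow> 0"
    if yC: "\<forall>n. norm (y n) \<le> C" and ys: "\<forall>s\<in>S. (\<lambda>n. cs s (y n)) \<longlonglongrightarrow> 0" for y C
    unfolding k_def
  proof (rule l2_tail_conv[OF sa sb, where C="C\<^sup>2"])
    fix n
    have "(norm (y n))\<^sup>2 \<le> C\<^sup>2" using yC by (intro power_mono) auto
    then show "(\<Sum>i. (cs (P i) (y n))\<^sup>2) \<le> C\<^sup>2" using sbv[of "y n"] by linarith
  next
    fix i
    show "(\<lambda>n. cs (P i) (y n)) \<longlonglongrightarrow> 0"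
    proof (cases "P i = {}")
      case True then show ?thesis by (simp add: cs_empty)
    next
      case False
      then have "P i \<in> S" using P(1)[of i] unfolding S0_def by auto
      then show ?thesis using ys by blast
    qed
  qed
  show ?thesis
    using kbl kabs kx kconv by (intro exI[of _ k]) (auto simp: abs_le_iff)
qed

end



lemma convex_lin_le:
  assumes "bounded_linear k"
  shows "convex {w. k w \<le> (c::real)}"
proof -
  interpret bounded_linear k by fact
  show ?thesis
    unfolding convex_def
  proof (intro ballI allI impI, simp)
    fix x y :: 'a and u v :: real
    assume "k x \<le> c" "k y \<le> c" "0 \<le> u" "0 \<le> v" "u + v = 1"
    then have "u * k x + v * k y \<le> u * c + v * c" by (intro add_mono mult_left_mono) auto
    then show "k (u *\<^sub>R x + v *\<^sub>R y) \<le> c" using \<open>u + v = 1\<close> by (simp add: add scale distrib_right[symmetric])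
  qed
qed

lemma half_series_closure:
  fixes w :: "nat \<Rightarrow> 'a::banach"
  assumes cv: "convex C0" and wC: "\<And>j. w j \<in> C0" and wb: "\<And>j. norm (w j) \<le> B"
  shows "summable (\<lambda>j. (1/2::real)^(Suc j) *\<^sub>R w j)" "(\<Sum>j. (1/2::real)^(Suc j) *\<^sub>R w j) \<in> closure C0"
proof -
  have B0: "B \<ge> 0" using wb[of 0] norm_ge_zero order_trans by blast
  show sm: "summable (\<lambda>j. (1/2::real)^(Suc j) *\<^sub>R w j)"
  proof (rule summable_comparison_test[where g="\<lambda>j. B * (1/2)^(Suc j)"])
    show "\<exists>N. \<forall>n\<ge>N. norm ((1/2::real)^(Suc n) *\<^sub>R w n) \<le> B * (1/2)^(Suc n)"
      using wb by (auto simp: mult.commute intro!: mult_left_mono)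
    show "summable (\<lambda>j. B * (1/2::real)^(Suc j))"
      by (intro summable_mult) (simp add: summable_geometric_iff)
  qed
  define SM where "SM M = (\<Sum>j<M. (1/2::real)^(Suc j) *\<^sub>R w j)" for M
  have ind: "\<forall>v\<in>C0. SM M + (1/2::real)^M *\<^sub>R v \<in> C0" for M
  proof (induction M)
    case 0 then show ?case by (simp add: SM_def)
  next
    case (Suc M)
    show ?case
    proof
      fix v assume "v \<in> C0"
      have mid: "(1/2::real) *\<^sub>R w M + (1/2::real) *\<^sub>R v \<in> C0"
        by (rule convexD[OF cv wC \<open>v \<in> C0\<close>]) auto
      have "SM (Suc M) + (1/2::real)^(Suc M) *\<^sub>R v = SM M + (1/2::real)^M *\<^sub>R ((1/2::real) *\<^sub>R w M + (1/2::real) *\<^sub>R v)"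
        by (simp add: SM_def scaleR_add_right algebra_simps)
      then show "SM (Suc M) + (1/2::real)^(Suc M) *\<^sub>R v \<in> C0" using Suc.IH mid by simp
    qed
  qed
  have lim1: "SM \<longlonglongrightarrow> (\<Sum>j. (1/2::real)^(Suc j) *\<^sub>R w j)"
    unfolding SM_def by (rule summable_LIMSEQ[OF sm])
  have lim2: "(\<lambda>M. (1/2::real)^M *\<^sub>R w 0) \<longlonglongrightarrow> 0"
    using tendsto_scaleR[OF LIMSEQ_power_zero[of "1/2::real"] tendsto_const[of "w 0"]] by simp
  have "(\<lambda>M. SM M + (1/2::real)^M *\<^sub>R w 0) \<longlonglongrightarrow> (\<Sum>j. (1/2::real)^(Suc j) *\<^sub>R w j) + 0"
    by (rule tendsto_add[OF lim1 lim2])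
  then show "(\<Sum>j. (1/2::real)^(Suc j) *\<^sub>R w j) \<in> closure C0"
    unfolding closure_sequential using ind wC by (intro exI[of _ "\<lambda>M. SM M + (1/2::real)^M *\<^sub>R w 0"]) auto
qed




lemma simons:
  fixes y :: "nat \<Rightarrow> 'x::banach"
  assumes yC: "\<And>n. norm (y n) \<le> C"
    and b0: "\<beta> > 0" and bw: "\<And>w. w \<in> convex hull (range y) \<Longrightarrow> norm w \<ge> \<beta>"
    and nrm: "\<And>z. \<exists>k. bounded_linear k \<and> (\<forall>v. k v \<le> norm v) \<and> k z = norm z \<and> (\<lambda>n. k (y n)) \<longlonglongrightarrow> 0"
  shows False
proof -
  define Cn where "Cn n = convex hull (y ` {n..})" for n
  have Cn_ne: "Cn n \<noteq> {}" for n unfolding Cn_def by auto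
  have Cn_y: "y n \<in> Cn n" for n unfolding Cn_def by (rule hull_inc) auto
  have Cn_cv: "convex (Cn n)" for n unfolding Cn_def by simp
  have Cn_mono: "Cn m \<subseteq> Cn n" if "n \<le> m" for n m
    unfolding Cn_def by (rule hull_mono) (use that in auto)
  have Cn_b: "norm u \<le> C" if "u \<in> Cn n" for u n
  proof -
    have "Cn n \<subseteq> cball 0 C" unfolding Cn_def
      by (rule hull_minimal) (use yC in \<open>auto simp: convex_cball\<close>)
    then show ?thesis using that by auto
  qed
  have step: "\<exists>p. fst p > n \<and> snd p \<in> Cn (fst p) \<and> (\<exists>M. norm (H + r *\<^sub>R snd p) \<le> M + e \<and>
               (\<forall>v\<in>closure (Cn (fst p)). M - e \<le> norm (H + r *\<^sub>R v)))"
    if e0: "e > 0" for H :: 'x and r e :: real and n :: nat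
  proof -
    define \<iota> where "\<iota> m = Inf ((\<lambda>u. norm (H + r *\<^sub>R u)) ` Cn m)" for m
    have bb: "bdd_below ((\<lambda>u. norm (H + r *\<^sub>R u)) ` Cn m)" for m by (rule bdd_belowI[of _ 0]) auto
    have \<iota>mono: "\<iota> m \<le> \<iota> m'" if "m \<le> m'" for m m'
      unfolding \<iota>_def by (rule cInf_superset_mono) (use Cn_ne bb Cn_mono[OF that] in auto)
    have \<iota>low: "\<iota> m \<le> norm (H + r *\<^sub>R u)" if "u \<in> Cn m" for u m
      unfolding \<iota>_def by (rule cInf_lower[OF _ bb]) (use that in auto)
    have \<iota>bd: "\<iota> m \<le> norm H + \<bar>r\<bar> * C" for m
    proof -
      have "\<iota> m \<le> norm (H + r *\<^sub>R y m)" by (rule \<iota>low[OF Cn_y])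
      also have "\<dots> \<le> norm H + \<bar>r\<bar> * norm (y m)" by (metis norm_scaleR norm_triangle_ineq)
      also have "\<dots> \<le> norm H + \<bar>r\<bar> * C" using yC[of m] by (simp add: mult_left_mono)
      finally show ?thesis .
    qed
    have ba: "bdd_above (range \<iota>)" by (rule bdd_aboveI2[of _ _ "norm H + \<bar>r\<bar> * C"]) (rule \<iota>bd)
    define M where "M = (SUP m. \<iota> m)"
    have "M - e < M" using e0 by simp
    then obtain n0 where n0: "M - e < \<iota> n0" unfolding M_def using less_cSUP_iff[OF _ ba] by auto
    define n' where "n' = max n0 (Suc n)"
    have "\<iota> n0 \<le> \<iota> n'" by (rule \<iota>mono) (simp add: n'_def)
    have "\<iota> n' < \<iota> n' + e" using e0 by simp
    then obtain u where u: "u \<in> Cn n'" "norm (H + r *\<^sub>R u) < \<iota> n' + e"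
    proof -
      have "(\<lambda>u. norm (H + r *\<^sub>R u)) ` Cn n' \<noteq> {}" using Cn_ne by simp
      from cInf_less_iff[OF this bb, of "\<iota> n' + e"] \<open>\<iota> n' < \<iota> n' + e\<close>
      obtain u where "u \<in> Cn n'" "norm (H + r *\<^sub>R u) < \<iota> n' + e" unfolding \<iota>_def by auto
      then show ?thesis using that by blast
    qed
    have "\<iota> n' \<le> M" unfolding M_def by (rule cSUP_upper[OF _ ba]) simp
    have low: "\<forall>v\<in>closure (Cn n'). M - e \<le> norm (H + r *\<^sub>R v)"
    proof -
      have "Cn n' \<subseteq> {v. M - e \<le> norm (H + r *\<^sub>R v)}"
        using \<iota>low n0 \<open>\<iota> n0 \<le> \<iota> n'\<close> by force
      moreover have "closed {v. M - e \<le> norm (H + r *\<^sub>R v)}"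
        by (rule closed_Collect_le) (auto intro!: continuous_intros)
      ultimately have "closure (Cn n') \<subseteq> {v. M - e \<le> norm (H + r *\<^sub>R v)}"
        by (rule closure_minimal)
      then show ?thesis by auto
    qed
    show ?thesis
    proof (rule exI[of _ "(n', u)"], simp, intro conjI exI[of _ M])
      show "n < n'" by (simp add: n'_def)
      show "u \<in> Cn n'" by (rule u(1))
      show "norm (H + r *\<^sub>R u) \<le> M + e" using u(2) \<open>\<iota> n' \<le> M\<close> by simp
      show "\<forall>v\<in>closure (Cn n'). M - e \<le> norm (H + r *\<^sub>R v)" by (rule low)
    qed
  qed
  define \<delta> where "\<delta> = \<beta> / 2"
  define rK where "rK K = (1/2::real)^K" for K
  define eK where "eK K = rK K * \<delta> * (1/2::real)^(Suc (Suc K))" for K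
  have rK0: "rK K > 0" for K unfolding rK_def by simp
  have eK0: "eK K > 0" for K unfolding eK_def using rK0 b0 by (simp add: \<delta>_def)
  define good where "good K H n p \<longleftrightarrow> fst p > n \<and> snd p \<in> Cn (fst p) \<and> (\<exists>M. norm (H + rK K *\<^sub>R snd p) \<le> M + eK K \<and>
               (\<forall>v\<in>closure (Cn (fst p)). M - eK K \<le> norm (H + rK K *\<^sub>R v)))" for K H n and p :: "nat \<times> 'x"
  define stp where "stp K H n = (SOME p. good K H n p)" for K H n
  have stp_good: "good K H n (stp K H n)" for K H n
    unfolding stp_def good_def by (rule someI_ex) (rule step[OF eK0])
  define st where "st = rec_nat (0::'x, 0::nat)
      (\<lambda>K hn. (fst hn + (1/2::real)^(Suc K) *\<^sub>R snd (stp K (fst hn) (snd hn)), fst (stp K (fst hn) (snd hn))))"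
  define Hs where "Hs K = fst (st K)" for K
  define ns where "ns K = snd (st K)" for K
  define uu where "uu K = snd (stp K (Hs K) (ns K))" for K
  have Hs0: "Hs 0 = 0" and ns0: "ns 0 = 0" unfolding Hs_def ns_def st_def by simp_all
  have HsS: "Hs (Suc K) = Hs K + (1/2::real)^(Suc K) *\<^sub>R uu K" for K
    unfolding Hs_def uu_def ns_def st_def by simp
  have nsS: "ns (Suc K) = fst (stp K (Hs K) (ns K))" for K
    unfolding Hs_def ns_def st_def by simp
  have gK: "good K (Hs K) (ns K) (ns (Suc K), uu K)" for K
    using stp_good[of K "Hs K" "ns K"] unfolding nsS uu_def by simp
  have ns_lt: "ns K < ns (Suc K)" for K using gK[of K] unfolding good_def by simp
  have uuC: "uu K \<in> Cn (ns (Suc K))" for K using gK[of K] unfolding good_def by simp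
  obtain MK where MK1: "\<And>K. norm (Hs K + rK K *\<^sub>R uu K) \<le> MK K + eK K"
    and MK2: "\<And>K v. v \<in> closure (Cn (ns (Suc K))) \<Longrightarrow> MK K - eK K \<le> norm (Hs K + rK K *\<^sub>R v)"
    using gK unfolding good_def by simp metis
  have ns_mono: "ns K \<le> ns K'" if "K \<le> K'" for K K'
    using that by (induction K' rule: dec_induct) (auto intro: order_trans less_imp_le[OF ns_lt])
  have ns_ge: "K \<le> ns K" for K by (induction K) (auto intro: Suc_le_eq[THEN iffD2] le_less_trans[OF _ ns_lt])
  have uub: "norm (uu K) \<le> C" for K using Cn_b[OF uuC] .
  define f where "f j = (1/2::real)^(Suc j) *\<^sub>R uu j" for j
  have Hs_sum: "Hs K = (\<Sum>j<K. f j)" for K by (induction K) (simp_all add: Hs0 HsS f_def)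
  have fsum: "summable f"
    unfolding f_def by (rule half_series_closure(1)[OF Cn_cv[of 0] _ uub]) (use Cn_mono uuC in blast)
  define z where "z = suminf f"
  define T where "T K = (\<Sum>j. (1/2::real)^(Suc j) *\<^sub>R uu (j + K))" for K
  have TK: "z = Hs K + rK K *\<^sub>R T K" for K
  proof -
    have sm: "summable (\<lambda>j. (1/2::real)^(Suc j) *\<^sub>R uu (j + K))"
      by (rule half_series_closure(1)[OF Cn_cv[of 0] _ uub]) (use Cn_mono uuC in blast)
    have "z = (\<Sum>j. f (j + K)) + (\<Sum>j<K. f j)" unfolding z_def by (rule suminf_split_initial_segment[OF fsum])
    also have "(\<Sum>j. f (j + K)) = (\<Sum>j. rK K *\<^sub>R ((1/2::real)^(Suc j) *\<^sub>R uu (j + K)))"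
      unfolding f_def rK_def by (simp add: power_add mult.commute)
    also have "\<dots> = rK K *\<^sub>R T K" unfolding T_def by (rule suminf_scaleR_right[OF sm, symmetric])
    finally show ?thesis using Hs_sum by simp
  qed
  have T_cl: "T K \<in> closure (Cn (ns (Suc K)))" for K
    unfolding T_def
  proof (rule half_series_closure(2)[OF Cn_cv _ uub])
    fix j show "uu (j + K) \<in> Cn (ns (Suc K))"
      using uuC[of "j + K"] Cn_mono[OF ns_mono[of "Suc K" "Suc (j + K)"]] by auto
  qed
  have T_rec: "T K = (1/2::real) *\<^sub>R uu K + (1/2::real) *\<^sub>R T (Suc K)" for K
  proof -
    have "rK K *\<^sub>R T K = rK K *\<^sub>R ((1/2::real) *\<^sub>R uu K + (1/2::real) *\<^sub>R T (Suc K))"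
      using TK[of K] TK[of "Suc K"] HsS[of K] unfolding rK_def
      by (simp add: scaleR_add_right algebra_simps)
    then show ?thesis using rK0[of K] by simp
  qed
  obtain k where kbl: "bounded_linear k" and kle: "\<And>v. k v \<le> norm v" and kz: "k z = norm z"
    and ky: "(\<lambda>n. k (y n)) \<longlonglongrightarrow> 0" using nrm[of z] by blast
  interpret kl: bounded_linear k by (rule kbl)
  have dec: "k (T K) - k (T (Suc K)) \<le> \<delta> * (1/2::real)^(Suc K)" for K
  proof -
    have zl: "MK K - eK K \<le> norm z" using MK2[OF T_cl[of K]] TK[of K] by simp
    have a1: "k (Hs K) + rK K * k (uu K) \<le> MK K + eK K"
      using kle[of "Hs K + rK K *\<^sub>R uu K"] MK1[of K] by (simp add: kl.add kl.scale)
    have a2: "k z = k (Hs K) + rK K * k (T K)" using TK[of K] by (simp add: kl.add kl.scale)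
    have "rK K * (k (uu K) - k (T K)) \<le> 2 * eK K" using a1 a2 zl kz by (simp add: algebra_simps)
    also have "2 * eK K = rK K * (\<delta> * (1/2::real)^(Suc K))" unfolding eK_def by simp
    finally have "k (uu K) - k (T K) \<le> \<delta> * (1/2::real)^(Suc K)"
      using rK0[of K] by (simp add: mult_le_cancel_left_pos)
    moreover have "k (T K) = (1/2) * k (uu K) + (1/2) * k (T (Suc K))"
      using T_rec[of K] by (simp add: kl.add kl.scale)
    ultimately show ?thesis by simp
  qed
  have tele: "k (T 0) - k (T K) \<le> \<delta> * (1 - (1/2::real)^K)" for K
  proof (induction K)
    case 0 then show ?case by simp
  next
    case (Suc K)
    then show ?case using dec[of K] by (simp add: algebra_simps)
  qed
  have T0: "T 0 = z" using TK[of 0] Hs0 unfolding rK_def by simp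
  have zb: "norm z \<ge> \<beta>"
  proof -
    have "Cn 0 \<subseteq> {w. \<beta> \<le> norm w}" using bw unfolding Cn_def by auto
    moreover have "closed {w::'x. \<beta> \<le> norm w}" by (rule closed_Collect_le) (auto intro!: continuous_intros)
    ultimately have "closure (Cn 0) \<subseteq> {w. \<beta> \<le> norm w}" by (rule closure_minimal)
    moreover have "z \<in> closure (Cn 0)"
      using T_cl[of 0] closure_mono[OF Cn_mono[of 0 "ns 1"]] T0 by auto
    ultimately show ?thesis by auto
  qed
  have kT: "k (T K) \<ge> \<beta> / 2" for K
  proof -
    have "\<delta> * (1 - (1/2::real)^K) \<le> \<delta>" using b0 unfolding \<delta>_def by simp
    moreover have "k (T 0) = norm z" using T0 kz by simp
    ultimately show ?thesis using tele[of K] zb unfolding \<delta>_def by linarith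
  qed
  have "\<beta> / 4 > 0" using b0 by simp
  then obtain N0 where N0: "\<And>n. n \<ge> N0 \<Longrightarrow> \<bar>k (y n)\<bar> < \<beta> / 4"
    using LIMSEQ_D[OF ky] by (metis real_norm_def diff_zero)
  have "Cn (ns (Suc N0)) \<subseteq> {w. k w \<le> \<beta> / 4}"
    unfolding Cn_def
  proof (rule hull_minimal)
    show "y ` {ns (Suc N0)..} \<subseteq> {w. k w \<le> \<beta> / 4}"
    proof
      fix w assume "w \<in> y ` {ns (Suc N0)..}"
      then obtain n where "w = y n" "n \<ge> ns (Suc N0)" by auto
      moreover have "ns (Suc N0) \<ge> N0" using ns_ge[of "Suc N0"] by simp
      ultimately show "w \<in> {w. k w \<le> \<beta> / 4}" using N0[of n] by auto
    qed
    show "convex {w. k w \<le> \<beta> / 4}" by (rule convex_lin_le[OF kbl])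
  qed
  moreover have "closed {w. k w \<le> \<beta> / 4}" by (rule closed_Collect_le) (auto intro!: kl.continuous_on continuous_intros)
  ultimately have "closure (Cn (ns (Suc N0))) \<subseteq> {w. k w \<le> \<beta> / 4}" by (rule closure_minimal)
  then have "k (T N0) \<le> \<beta> / 4" using T_cl[of N0] by auto
  then show False using kT[of N0] b0 by simp
qed




theorem corollary2p7:
  fixes S :: "'g set set"
    and E :: "('g \<Rightarrow> real) \<Rightarrow> 'x::banach"
    and x :: "nat \<Rightarrow> 'x"
  assumes "pointwise_closed S"
    and "\<forall>a. {a} \<in> S"
    and "is_JS_completion S E"
    and "bounded (range x)"
    and "\<forall>s\<in>S. \<forall>f. is_s_star S E s f \<longrightarrow> Cauchy (\<lambda>n. f (x n))"
  shows "weakly_Cauchy x"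
proof -
  interpret J: jsc2 S E by unfold_locales (use assms in auto)
  obtain B where B: "\<And>n. norm (x n) \<le> B" using assms(4) unfolding bounded_iff by auto
  show ?thesis
    unfolding weakly_Cauchy_def
  proof (intro allI impI)
    fix f :: "'x \<Rightarrow> real" assume fbl: "bounded_linear f"
    interpret fl: bounded_linear f by (rule fbl)
    show "Cauchy (\<lambda>n. f (x n))"
    proof (rule ccontr)
      assume nC: "\<not> Cauchy (\<lambda>n. f (x n))"
      then obtain \<epsilon> where e0: "\<epsilon> > 0" and eN: "\<And>M. \<exists>m\<ge>M. \<exists>n\<ge>M. dist (f (x m)) (f (x n)) \<ge> \<epsilon>"
        unfolding Cauchy_def by (meson not_less)
      have "\<forall>M. \<exists>pq. fst pq \<ge> M \<and> snd pq \<ge> M \<and> f (x (fst pq)) - f (x (snd pq)) \<ge> \<epsilon>"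
      proof
        fix M
        obtain m n where mn: "m \<ge> M" "n \<ge> M" "dist (f (x m)) (f (x n)) \<ge> \<epsilon>" using eN[of M] by blast
        show "\<exists>pq. fst pq \<ge> M \<and> snd pq \<ge> M \<and> f (x (fst pq)) - f (x (snd pq)) \<ge> \<epsilon>"
        proof (cases "f (x m) - f (x n) \<ge> \<epsilon>")
          case True then show ?thesis using mn by (intro exI[of _ "(m, n)"]) auto
        next
          case False
          then have "f (x n) - f (x m) \<ge> \<epsilon>" using mn(3) by (auto simp: dist_real_def)
          then show ?thesis using mn by (intro exI[of _ "(n, m)"]) auto
        qed
      qed
      then obtain pq where pq: "\<And>M. fst (pq M) \<ge> M" "\<And>M. snd (pq M) \<ge> M"
        "\<And>M. f (x (fst (pq M))) - f (x (snd (pq M))) \<ge> \<epsilon>" by metis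
      define y where "y j = x (fst (pq j)) - x (snd (pq j))" for j
      have yb: "norm (y j) \<le> 2 * B" for j
      proof -
        have "norm (y j) \<le> norm (x (fst (pq j))) + norm (x (snd (pq j)))" unfolding y_def by (rule norm_triangle_ineq4)
        then show ?thesis using B[of "fst (pq j)"] B[of "snd (pq j)"] by simp
      qed
      have fy: "f (y j) \<ge> \<epsilon>" for j using pq(3)[of j] unfolding y_def by (simp add: fl.diff)
      obtain K where K: "K > 0" "\<And>v. norm (f v) \<le> norm v * K" using fl.pos_bounded by blast
      have hull: "convex hull (range y) \<subseteq> {w. (\<lambda>w. - f w) w \<le> - \<epsilon>}"
      proof (rule hull_minimal)
        show "range y \<subseteq> {w. - f w \<le> - \<epsilon>}" using fy by auto
        show "convex {w. (\<lambda>w. - f w) w \<le> - \<epsilon>}"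
          by (rule convex_lin_le) (rule bounded_linear_minus[OF fbl])
      qed
      have bw: "norm w \<ge> \<epsilon> / K" if "w \<in> convex hull (range y)" for w
      proof -
        have "f w \<ge> \<epsilon>" using hull that by auto
        then have "\<epsilon> \<le> norm w * K" using K(2)[of w] by simp
        then show ?thesis using K(1) by (simp add: divide_le_eq)
      qed
      have ycs: "(\<lambda>j. J.cs s (y j)) \<longlonglongrightarrow> 0" if "s \<in> S" for s
      proof -
        have s0: "s \<in> J.S0" using that unfolding J.S0_def by simp
        have cC: "Cauchy (\<lambda>n. J.cs s (x n))" using assms(5) J.cs_star[OF that] that by blast
        show ?thesis
        proof (rule LIMSEQ_I)
          fix r :: real assume "r > 0"
          then obtain M where M: "\<And>m n. m \<ge> M \<Longrightarrow> n \<ge> M \<Longrightarrow> dist (J.cs s (x m)) (J.cs s (x n)) < r"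
            using cC unfolding Cauchy_def by blast
          show "\<exists>no. \<forall>n\<ge>no. norm (J.cs s (y n) - 0) < r"
          proof (intro exI allI impI)
            fix j assume "j \<ge> M"
            then have "dist (J.cs s (x (fst (pq j)))) (J.cs s (x (snd (pq j)))) < r"
              using pq(1,2)[of j] by (intro M) auto
            then show "norm (J.cs s (y j) - 0) < r"
              unfolding y_def J.cs_diff[OF s0] by (simp add: dist_real_def)
          qed
        qed
      qed
      have nrm: "\<exists>k. bounded_linear k \<and> (\<forall>v. k v \<le> norm v) \<and> k z = norm z \<and> (\<lambda>n. k (y n)) \<longlonglongrightarrow> 0" for z
      proof -
        obtain k where k: "bounded_linear k" "\<forall>v. k v \<le> norm v" "k z = norm z"
          "\<forall>y C. (\<forall>n. norm (y n) \<le> C) \<longrightarrow> (\<forall>s\<in>S. (\<lambda>n. J.cs s (y n)) \<longlonglongrightarrow> 0) \<longrightarrow> (\<lambda>n. k (y n)) \<longlonglongrightarrow> 0"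
          using J.norming[of z] by blast
        have "(\<lambda>n. k (y n)) \<longlonglongrightarrow> 0" using k(4) yb ycs by blast
        then show ?thesis using k(1-3) by blast
      qed
      show False
        by (rule simons[OF yb _ bw nrm]) (use e0 K(1) in simp)
    qed
  qed
qed


end
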